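(* Let $d\ge1$, $f(t)=e^{-\pi|t|^2}$ on $\mathbb{R}^d$, $N>1$ and $0<R<\sqrt{\log N/\pi}$. Then there is no $g\in L^2(\mathbb{R}^d)\setminus\{0\}$ such that \[ |V_g f(z)|<\frac{|\langle f,g\rangle|}{N}\quad\text{for all } z\in\mathbb{R}^{2d}\text{ with } |z|>R. \]
   Context: For $f,g\in L^2(\mathbb{R}^d)$, the short-time Fourier transform is $V_g f(x,\omega)=\int_{\mathbb{R}^d} e^{-2\pi i t\cdot\omega} f(t)\overline{g(t-x)}\,dt$ for $z=(x,\omega)\in\mathbb{R}^{2d}$, and $\langle f,g\rangle=\int_{\mathbb{R}^d} f(t)\overline{g(t)}\,dt$. $|\cdot|$ is the Euclidean norm. *)

theory Defs
  imports "HOL-Analysis.Analysis"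
begin

text \<open>Functions on R^d are modelled as maps real^'n => complex (d = CARD('n)).\<close>

definition L2 :: "(real^'n \<Rightarrow> complex) set" where
  "L2 = {g. g \<in> borel_measurable lebesgue \<and> integrable lebesgue (\<lambda>t. (norm (g t))\<^sup>2)}"

definition inner_L2 :: "(real^'n \<Rightarrow> complex) \<Rightarrow> (real^'n \<Rightarrow> complex) \<Rightarrow> complex" where
  "inner_L2 f g = integral\<^sup>L lebesgue (\<lambda>t. f t * cnj (g t))"

definition stft :: "(real^'n \<Rightarrow> complex) \<Rightarrow> (real^'n \<Rightarrow> complex) \<Rightarrow> real^'n \<Rightarrow> real^'n \<Rightarrow> complex" where
  "stft g f x w = integral\<^sup>L lebesgue
     (\<lambda>t. exp (- 2 * complex_of_real pi * \<i> * complex_of_real (t \<bullet> w)) * f t * cnj (g (t - x)))"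

definition gaussian :: "real^'n \<Rightarrow> complex" where
  "gaussian t = complex_of_real (exp (- pi * (norm t)\<^sup>2))"

end

theory Submission
  imports Defs "HOL-Probability.Distributions" "HOL-Complex_Analysis.Cauchy_Integral_Formula"
begin


lemma circle_mean:
  fixes a b :: complex
  shows "((\<lambda>t::real. exp (a * exp (2 * of_real pi * \<i> * of_real t)
          + b * (exp (2 * of_real pi * \<i> * of_real t))^2)) has_integral 1) {0..1}"
proof -
  define F where "F = (\<lambda>u::complex. exp (a * u + b * u^2))"
  have "((\<lambda>u. F u / (u - 0)) has_contour_integral (2 * of_real pi * \<i> * F 0)) (circlepath 0 1)"
    by (rule Cauchy_integral_circlepath) (auto simp: F_def intro!: holomorphic_intros continuous_intros)
  hence "((\<lambda>t. F (exp (2 * of_real pi * \<i> * of_real t)) / exp (2 * of_real pi * \<i> * of_real t)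
      * (2 * pi * \<i> * exp (2 * of_real pi * \<i> * of_real t))) has_integral (2 * of_real pi * \<i>)) {0..1}"
    unfolding has_contour_integral vector_derivative_circlepath by (simp add: circlepath F_def)
  hence "((\<lambda>t. (2 * of_real pi * \<i>) * F (exp (2 * of_real pi * \<i> * of_real t))) has_integral (2 * of_real pi * \<i>)) {0..1}"
    by (simp add: field_simps)
  hence "((\<lambda>t. F (exp (2 * of_real pi * \<i> * of_real t))) has_integral (2 * of_real pi * \<i>)/(2 * of_real pi * \<i>)) {0..1}"
    by (subst (asm) has_integral_mult_right_iff) auto
  thus ?thesis by (simp add: F_def)
qed


lemma lebesgue_translate_eq:
  fixes a :: "'a::euclidean_space"
  shows "lebesgue = distr lebesgue lebesgue (\<lambda>x. a + x)"
    and "(\<lambda>x. a + x) \<in> lebesgue \<rightarrow>\<^sub>M lebesgue"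
  using lebesgue_affine_euclidean[of "\<lambda>_. 1" a] lebesgue_affine_measurable[of "\<lambda>_. 1" a]
  by (simp_all add: euclidean_representation density_1)

lemma integral_translate:
  fixes F :: "'a::euclidean_space \<Rightarrow> 'b::{banach,second_countable_topology}"
  assumes "F \<in> borel_measurable lebesgue"
  shows "integral\<^sup>L lebesgue F = integral\<^sup>L lebesgue (\<lambda>s. F (a + s))"
proof -
  have "integral\<^sup>L lebesgue F = integral\<^sup>L (distr lebesgue lebesgue (\<lambda>x. a + x)) F"
    using lebesgue_translate_eq(1)[of a] by simp
  also have "\<dots> = integral\<^sup>L lebesgue (\<lambda>s. F (a + s))"
    by (rule integral_distr[OF lebesgue_translate_eq(2) assms])
  finally show ?thesis .
qed

lemma gauss1_integrable: "integrable lborel (\<lambda>x::real. exp (- pi * x^2))"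
proof -
  have "integrable lborel (normal_density 0 (sqrt (1/(2*pi))))" by simp
  moreover have "normal_density 0 (sqrt (1/(2*pi))) = (\<lambda>x::real. exp (- pi * x^2))"
    by (auto simp: normal_density_def fun_eq_iff field_simps)
  ultimately show ?thesis by simp
qed


lemma gauss_integrable_lborel:
  "integrable lborel (\<lambda>s::'a::euclidean_space. exp (- pi * (norm s)^2))"
proof -
  interpret product_sigma_finite "\<lambda>_::'a. lborel :: real measure" by standard
  have "integrable (\<Pi>\<^sub>M b\<in>(Basis::'a set). lborel) (\<lambda>f. \<Prod>b\<in>Basis. exp (- pi * (f b)^2))"
    using product_integrable_prod[of Basis "\<lambda>_ y. exp (- pi * y^2)"] gauss1_integrable by simp
  moreover have "(\<Prod>b\<in>Basis. exp (- pi * (f b)^2)) = exp (- pi * (norm (\<Sum>b\<in>Basis. f b *\<^sub>R b))^2)"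
    for f :: "'a \<Rightarrow> real"
  proof -
    define x where "x = (\<Sum>b\<in>(Basis::'a set). f b *\<^sub>R b)"
    have "x \<bullet> x = (\<Sum>b\<in>Basis. f b * (x \<bullet> b))"
      by (subst (2) x_def) (simp add: inner_sum_right)
    also have "\<dots> = (\<Sum>b\<in>Basis. (f b)^2)"
      by (intro sum.cong refl) (simp add: x_def power2_eq_square)
    finally have "(norm (\<Sum>b\<in>Basis. f b *\<^sub>R b))^2 = (\<Sum>b\<in>Basis. (f b)^2)"
      unfolding power2_norm_eq_inner x_def .
    thus ?thesis by (simp add: exp_sum[symmetric] sum_distrib_left)
  qed
  ultimately have "integrable (\<Pi>\<^sub>M b\<in>(Basis::'a set). lborel) (\<lambda>f. exp (- pi * (norm (\<Sum>b\<in>Basis. f b *\<^sub>R b))^2))"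
    by simp
  hence "integrable (distr (\<Pi>\<^sub>M b\<in>(Basis::'a set). lborel) borel (\<lambda>f. \<Sum>b\<in>Basis. f b *\<^sub>R b)) (\<lambda>s::'a. exp (- pi * (norm s)^2))"
    by (subst integrable_distr_eq) auto
  thus ?thesis by (simp add: lborel_eq[symmetric])
qed

lemma gauss_integrable:
  "integrable lebesgue (\<lambda>s::'a::euclidean_space. exp (- pi * (norm s)^2))"
  using gauss_integrable_lborel by (subst integrable_completion) auto


lemma kernel_id:
  fixes s e :: "real^'n" and r t :: real
  assumes e: "norm e = 1"
  defines "x \<equiv> (r * cos (2*pi*t)) *\<^sub>R e" and "w \<equiv> (r * sin (2*pi*t)) *\<^sub>R e"
  defines "u \<equiv> exp (2 * complex_of_real pi * \<i> * complex_of_real t)"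
  shows "exp (complex_of_real pi * \<i> * complex_of_real (x \<bullet> w)) *
     (exp (- 2 * complex_of_real pi * \<i> * complex_of_real ((x + s) \<bullet> w)) * gaussian (x + s))
   = complex_of_real (exp (- pi * r^2 / 2)) * gaussian s *
     exp (complex_of_real (-2*pi*r*(s \<bullet> e)) * u + complex_of_real (- pi * r^2/2) * u^2)"
proof -
  define c where "c = cos (2*pi*t)"
  define sn where "sn = sin (2*pi*t)"
  have cs: "c^2 + sn^2 = 1" by (simp add: c_def sn_def)
  have ee: "e \<bullet> e = 1" using e by (simp add: power2_norm_eq_inner[symmetric])
  have u: "u = Complex c sn"
    by (simp add: u_def c_def sn_def complex_eq_iff exp_Euler[symmetric] Re_exp Im_exp mult.commute mult.left_commute)
  have xw: "x \<bullet> w = r^2 * c * sn" by (simp add: x_def w_def ee c_def sn_def power2_eq_square)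
  have xsw: "(x + s) \<bullet> w = r^2 * c * sn + r * sn * (s \<bullet> e)"
    by (simp add: x_def w_def inner_add_left inner_add_right ee c_def sn_def power2_eq_square inner_commute[of s e] algebra_simps)
  have nxs: "(norm (x + s))^2 = (norm s)^2 + 2 * r * c * (s \<bullet> e) + r^2 * c^2"
    unfolding power2_norm_eq_inner by (simp add: inner_add_left inner_add_right x_def ee c_def inner_commute[of s e] power2_eq_square algebra_simps)
  have L: "exp (complex_of_real pi * \<i> * complex_of_real (x \<bullet> w)) *
     (exp (- 2 * complex_of_real pi * \<i> * complex_of_real ((x + s) \<bullet> w)) * gaussian (x + s))
     = exp (complex_of_real pi * \<i> * complex_of_real (x \<bullet> w) + (- 2 * complex_of_real pi * \<i> * complex_of_real ((x + s) \<bullet> w))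
        + complex_of_real (- pi * (norm (x+s))^2))"
    by (simp add: gaussian_def exp_of_real[symmetric] mult.assoc add.assoc flip: exp_add) (simp add: algebra_simps)
  have R: "complex_of_real (exp (- pi * r^2 / 2)) * gaussian s *
     exp (complex_of_real (-2*pi*r*(s \<bullet> e)) * u + complex_of_real (- pi * r^2/2) * u^2)
     = exp (complex_of_real (- pi * r^2 / 2) + complex_of_real (- pi * (norm s)^2) +
        (complex_of_real (-2*pi*r*(s \<bullet> e)) * u + complex_of_real (- pi * r^2/2) * u^2))"
    by (simp add: gaussian_def exp_of_real[symmetric] mult.assoc add.assoc flip: exp_add)
  have Z: "complex_of_real pi * \<i> * complex_of_real (x \<bullet> w) + (- 2 * complex_of_real pi * \<i> * complex_of_real ((x + s) \<bullet> w))
        + complex_of_real (- pi * (norm (x+s))^2) =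
        complex_of_real (- pi * r^2 / 2) + complex_of_real (- pi * (norm s)^2) +
        (complex_of_real (-2*pi*r*(s \<bullet> e)) * u + complex_of_real (- pi * r^2/2) * u^2)"
  proof -
    have sn2: "sn^2 = 1 - c^2" using cs by simp
    show ?thesis
      unfolding complex_eq_iff u xw xsw nxs by (simp add: power2_eq_square) (simp add: sn2[unfolded power2_eq_square] algebra_simps, simp add: field_simps)
  qed
  show ?thesis using L R Z by simp
qed

lemma ident_leb: "(\<lambda>x::'a::euclidean_space. x) \<in> lebesgue \<rightarrow>\<^sub>M lborel"
  by (rule measurable_completion) (rule measurable_ident_sets, rule refl)

lemma pair_id_meas: "(\<lambda>p. p) \<in> (lborel \<Otimes>\<^sub>M lebesgue) \<rightarrow>\<^sub>M (lborel \<Otimes>\<^sub>M (lborel::'a::euclidean_space measure))"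
proof -
  have "(\<lambda>p. (fst p, snd p)) \<in> (lborel \<Otimes>\<^sub>M lebesgue) \<rightarrow>\<^sub>M (lborel \<Otimes>\<^sub>M (lborel::'a measure))"
    by (rule measurable_Pair[OF measurable_fst measurable_compose[OF measurable_snd ident_leb]])
  thus ?thesis by simp
qed

lemma cont_meas_pair:
  fixes \<Psi> :: "real \<times> 'a::euclidean_space \<Rightarrow> complex"
  assumes "continuous_on UNIV \<Psi>"
  shows "\<Psi> \<in> borel_measurable (lborel \<Otimes>\<^sub>M lebesgue)"
proof -
  have 0: "\<Psi> \<in> borel_measurable (lborel \<Otimes>\<^sub>M lborel)"
    unfolding lborel_prod by (subst measurable_cong_sets[OF sets_lborel refl]) (rule borel_measurable_continuous_onI[OF assms])
  show ?thesis using measurable_compose[OF pair_id_meas 0] by simp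
qed
lemma sf_leb: "sigma_finite_measure (lebesgue :: 'a::euclidean_space measure)"
proof
  obtain A :: "'a set set" where A: "countable A" "A \<subseteq> sets lborel" "\<Union>A = space lborel"
      "\<forall>a\<in>A. emeasure lborel a \<noteq> \<infinity>"
    using lborel.sigma_finite_countable by blast
  have "\<forall>a\<in>A. emeasure lebesgue a \<noteq> \<infinity>" using A by (auto simp: subset_eq)
  thus "\<exists>A::'a set set. countable A \<and> A \<subseteq> sets lebesgue \<and> \<Union>A = space lebesgue \<and> (\<forall>a\<in>A. emeasure lebesgue a \<noteq> \<infinity>)"
    using A by (intro exI[of _ A]) auto
qed


lemma circle_lborel:
  fixes a b :: complex
  shows "(\<integral>t. indicator {0..1::real} t *\<^sub>R exp (a * exp (2 * of_real pi * \<i> * of_real t)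
          + b * (exp (2 * of_real pi * \<i> * of_real t))^2) \<partial>lborel) = 1"
proof -
  let ?E = "\<lambda>t::real. exp (a * exp (2 * of_real pi * \<i> * of_real t)
          + b * (exp (2 * of_real pi * \<i> * of_real t))^2)"
  have si: "set_integrable lborel {0..1} ?E"
    unfolding set_integrable_def
    by (rule borel_integrable_compact) (auto intro!: continuous_intros)
  have "(LINT x : {0..1} | lborel. ?E x) = integral {0..1} ?E"
    by (rule set_borel_integral_eq_integral(2)[OF si])
  also have "\<dots> = 1" using circle_mean[of a b] by (rule integral_unique)
  finally show ?thesis unfolding set_lebesgue_integral_def .
qed

lemma gauss_shift_bound:
  fixes s x :: "real^'n" and r :: real
  assumes "norm x \<le> r"
  shows "exp (- pi * (norm (x + s))^2) \<le> exp (pi * r^2) * exp (- pi * (norm s)^2 / 2)"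
proof -
  have "norm s \<le> norm (x + s) + norm x" using norm_triangle_ineq4[of "x + s" x] by simp
  hence "(norm s)^2 \<le> (norm (x + s) + norm x)^2" by (intro power_mono) auto
  also have "\<dots> \<le> 2 * (norm (x+s))^2 + 2 * (norm x)^2"
    using zero_le_power2[of "norm (x+s) - norm x"] by (simp add: power2_diff power2_sum)
  also have "\<dots> \<le> 2 * (norm (x+s))^2 + 2 * r^2"
    using assms by (intro add_left_mono mult_left_mono power_mono) auto
  finally have "pi * (norm s)^2 \<le> pi * (2 * (norm (x+s))^2 + 2 * r^2)"
    using pi_gt_zero by (intro mult_left_mono) auto
  hence "pi * (norm s)^2 \<le> 2 * (pi * (norm (x+s))^2) + 2 * (pi * r^2)"
    by (simp add: algebra_simps)
  hence "- pi * (norm (x + s))^2 \<le> pi * r^2 + (- pi * (norm s)^2 / 2)"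
    by linarith
  thus ?thesis by (simp add: exp_add[symmetric])
qed

lemma amgm_bound:
  fixes a b :: real
  assumes "0 \<le> a" "0 \<le> b"
  shows "a * b \<le> (a^2 + b^2) / 2"
  using zero_le_power2[of "a-b"] unfolding power2_diff mult.assoc by (simp add: field_simps)

theorem mainTheorem3:
  fixes N R :: real and g :: "real^'n \<Rightarrow> complex"
  assumes "N > 1" and "0 < R" and "R < sqrt (ln N / pi)"
    and "g \<in> L2" and "\<not> (AE t in lebesgue. g t = 0)"
  shows "\<not> (\<forall>x w. sqrt ((norm x)\<^sup>2 + (norm w)\<^sup>2) > R \<longrightarrow>
              norm (stft g gaussian x w) < norm (inner_L2 gaussian g) / N)"
proof
  assume H: "\<forall>x w. sqrt ((norm x)\<^sup>2 + (norm w)\<^sup>2) > R \<longrightarrow>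
              norm (stft g gaussian x w) < norm (inner_L2 gaussian g) / N"
  have gmeas[measurable]: "g \<in> borel_measurable lebesgue" and g2: "integrable lebesgue (\<lambda>t. (norm (g t))\<^sup>2)"
    using assms(4) by (auto simp: L2_def)
  define c where "c = inner_L2 gaussian g"
  define r where "r = (R + sqrt (ln N / pi)) / 2"
  have r0: "0 < r" "R < r" "r < sqrt (ln N / pi)" using assms by (auto simp: r_def)
  have "r^2 < (sqrt (ln N / pi))^2" using r0 by (intro power_strict_mono) auto
  also have "\<dots> = ln N / pi" using assms(1) by (simp add: real_sqrt_pow2 ln_gt_zero less_imp_le)
  finally have "pi * r^2 < ln N" using pi_gt_zero by (simp add: field_simps)
  hence "exp (pi * r^2 / 2) < N"
  proof -
    assume "pi * r^2 < ln N"
    have "exp (pi * r^2 / 2) \<le> exp (pi * r^2)" by (simp add: zero_le_power2)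
    also have "\<dots> < exp (ln N)" using \<open>pi * r^2 < ln N\<close> by simp
    finally show ?thesis using assms(1) by simp
  qed
  note expN = this
  obtain e :: "real^'n" where e: "norm e = 1" using vector_choose_size[of 1] by auto
  define xx where "xx t = (r * cos (2*pi*t)) *\<^sub>R e" for t
  define ww where "ww t = (r * sin (2*pi*t)) *\<^sub>R e" for t
  have nxx: "norm (xx t) \<le> r" for t
    using e r0 by (simp add: xx_def abs_mult abs_cos_le_one mult_left_le)
  have rad: "sqrt ((norm (xx t))\<^sup>2 + (norm (ww t))\<^sup>2) = r" for t
  proof -
    have "(norm (xx t))\<^sup>2 + (norm (ww t))\<^sup>2 = r^2 * ((cos (2*pi*t))^2 + (sin (2*pi*t))^2)"
      using e by (simp only: xx_def ww_def norm_scaleR power_mult_distrib power2_abs distrib_left mult_1_right power_one)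
    thus ?thesis using r0 by simp
  qed
  have Hb: "norm (stft g gaussian (xx t) (ww t)) < norm c / N" for t
    using H[rule_format, of "xx t" "ww t"] rad[of t] r0 unfolding c_def by simp
  define ph where "ph t = exp (complex_of_real pi * \<i> * complex_of_real (xx t \<bullet> ww t))" for t
  define \<Phi> where "\<Phi> t s = ph t * (exp (- 2 * complex_of_real pi * \<i> * complex_of_real ((xx t + s) \<bullet> ww t)) * gaussian (xx t + s))" for t s
  define P where "P = (\<lambda>(t,s). indicator {0..1::real} t *\<^sub>R (\<Phi> t s * cnj (g s)))"
  define B where "B s = exp (pi * r^2) / 2 * (exp (- pi * (norm s)^2) + (norm (g s))^2)" for s
  have Bint: "integrable lebesgue B"
    unfolding B_def using gauss_integrable g2 by (intro integrable_mult_right integrable_add) auto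
  have Bnn: "0 \<le> B s" for s by (simp add: B_def)
  have nph: "norm (ph t) = 1" for t by (simp add: ph_def)
  have nPhi: "norm (\<Phi> t s) = exp (- pi * (norm (xx t + s))^2)" for t s
    by (simp add: \<Phi>_def nph norm_mult gaussian_def)
  have Kb: "norm (\<Phi> t s * cnj (g s)) \<le> B s" for t s
  proof -
    have "norm (\<Phi> t s * cnj (g s)) = exp (- pi * (norm (xx t + s))^2) * norm (g s)"
      by (simp add: norm_mult nPhi)
    also have "\<dots> \<le> exp (pi * r^2) * exp (- pi * (norm s)^2 / 2) * norm (g s)"
      by (intro mult_right_mono gauss_shift_bound nxx) auto
    also have "\<dots> = exp (pi * r^2) * (exp (- pi * (norm s)^2 / 2) * norm (g s))" by simp
    also have "\<dots> \<le> exp (pi * r^2) * (((exp (- pi * (norm s)^2 / 2))^2 + (norm (g s))^2) / 2)"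
      by (intro mult_left_mono amgm_bound) auto
    also have "(exp (- pi * (norm s)^2 / 2))^2 = exp (- pi * (norm s)^2)"
      by (simp add: exp_double[symmetric] power2_eq_square exp_add[symmetric])
    finally show ?thesis by (simp add: B_def)
  qed
  have Pb: "norm (P (t, s)) \<le> indicator {0..1::real} t * B s" for t s
    using Kb[of t s] by (auto simp: P_def indicator_def)
  have Pmeas[measurable]: "P \<in> borel_measurable (lborel \<Otimes>\<^sub>M lebesgue)"
  proof -
    have c1: "(\<lambda>p. \<Phi> (fst p) (snd p)) \<in> borel_measurable (lborel \<Otimes>\<^sub>M lebesgue)"
      by (rule cont_meas_pair) (auto simp: \<Phi>_def ph_def xx_def ww_def gaussian_def intro!: continuous_intros)
    have cj: "(\<lambda>z::complex. cnj z) \<in> borel_measurable borel"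
      by (intro borel_measurable_continuous_onI continuous_on_cnj continuous_on_id)
    have c2: "(\<lambda>p. cnj (g (snd p))) \<in> borel_measurable (lborel \<Otimes>\<^sub>M lebesgue)"
      using measurable_compose[OF measurable_compose[OF measurable_snd gmeas] cj] .
    have c3: "(\<lambda>p::real \<times> (real^'n). indicator {0..1::real} (fst p) :: real) \<in> borel_measurable (lborel \<Otimes>\<^sub>M lebesgue)"
      by (rule measurable_compose[OF measurable_fst borel_measurable_indicator]) (simp only: sets_lborel atLeastAtMost_borel)
    have "(\<lambda>p. indicator {0..1} (fst p) *\<^sub>R (\<Phi> (fst p) (snd p) * cnj (g (snd p)))) \<in> borel_measurable (lborel \<Otimes>\<^sub>M lebesgue)"
      by (intro borel_measurable_scaleR c3 borel_measurable_times c1 c2)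
    thus ?thesis by (simp add: P_def case_prod_beta')
  qed
  interpret pair_sigma_finite "lborel :: real measure" "lebesgue :: (real^'n) measure"
    by (intro pair_sigma_finite.intro sigma_finite_lborel sf_leb)
  have Pt_int: "integrable lebesgue (\<lambda>s. P (t, s))" for t
    by (rule Bochner_Integration.integrable_bound[where f = "\<lambda>s. indicator {0..1::real} t * B s"])
       (use Bint Pb Bnn in \<open>auto intro!: integrable_mult_right AE_I2 simp: abs_mult\<close>)
  have Pint: "integrable (lborel \<Otimes>\<^sub>M lebesgue) P"
  proof (rule Fubini_integrable[OF Pmeas])
    show "AE x in lborel. integrable lebesgue (\<lambda>y. P (x, y))" using Pt_int by simp
    show "integrable lborel (\<lambda>x. \<integral> y. norm (P (x, y)) \<partial>lebesgue)"
    proof (rule Bochner_Integration.integrable_bound[where f = "\<lambda>t. indicator {0..1::real} t * (\<integral>s. B s \<partial>lebesgue)"])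
      show "integrable lborel (\<lambda>t. indicator {0..1::real} t * (\<integral>s. B s \<partial>lebesgue))"
        by (intro integrable_mult_left) (intro integrable_real_indicator, auto)
      show "(\<lambda>x. \<integral> y. norm (P (x, y)) \<partial>lebesgue) \<in> borel_measurable lborel"
      proof (rule M2.borel_measurable_lebesgue_integral)
        have "(\<lambda>p. norm (P p)) \<in> borel_measurable (lborel \<Otimes>\<^sub>M lebesgue)"
          using measurable_compose[OF Pmeas borel_measurable_norm] .
        moreover have "(\<lambda>p. norm (P p)) = (\<lambda>(x, y). norm (P (x, y)))" by auto
        ultimately show "(\<lambda>(x, y). norm (P (x, y))) \<in> borel_measurable (lborel \<Otimes>\<^sub>M lebesgue)" by simp
      qed
      show "AE x in lborel. norm (\<integral> y. norm (P (x, y)) \<partial>lebesgue) \<le> norm (indicator {0..1} x * (\<integral>s. B s \<partial>lebesgue))"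
      proof (rule AE_I2)
        fix t
        have "(\<integral> y. norm (P (t, y)) \<partial>lebesgue) \<le> (\<integral> y. indicator {0..1::real} t * B y \<partial>lebesgue)"
          by (rule integral_mono) (use Pt_int Bint Pb in \<open>auto intro!: integrable_mult_right\<close>)
        moreover have "0 \<le> (\<integral> y. norm (P (t, y)) \<partial>lebesgue)" by simp
        moreover have "0 \<le> (\<integral> y. B y \<partial>lebesgue)" by (rule integral_nonneg_AE) (simp add: B_def)
        ultimately show "norm (\<integral> y. norm (P (t, y)) \<partial>lebesgue) \<le> norm (indicator {0..1::real} t * (\<integral>s. B s \<partial>lebesgue))"
          by (simp add: indicator_def)
      qed
    qed
  qed
  have fub: "(\<integral>s. (\<integral>t. P (t, s) \<partial>lborel) \<partial>lebesgue) = (\<integral>t. (\<integral>s. P (t, s) \<partial>lebesgue) \<partial>lborel)"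
    using Fubini_integral[of "\<lambda>t s. P (t, s)"] Pint by simp
  have inner_s: "(\<integral>s. P (t, s) \<partial>lebesgue) = indicator {0..1::real} t *\<^sub>R (ph t * stft g gaussian (xx t) (ww t))" for t
  proof -
    let ?F = "\<lambda>y. exp (- 2 * complex_of_real pi * \<i> * complex_of_real (y \<bullet> ww t)) * gaussian y * cnj (g (y - xx t))"
    have tm: "(\<lambda>y. y - xx t) \<in> lebesgue \<rightarrow>\<^sub>M lebesgue"
      using lebesgue_translate_eq(2)[of "- xx t"] by simp
    have Fm: "?F \<in> borel_measurable lebesgue"
    proof -
      have cj': "(\<lambda>z::complex. cnj z) \<in> borel_measurable borel"
        by (intro borel_measurable_continuous_onI continuous_on_cnj continuous_on_id)
      have m1: "(\<lambda>y. g (y - xx t)) \<in> borel_measurable lebesgue" by (rule measurable_compose[OF tm gmeas])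
      have m2: "(\<lambda>y. exp (- 2 * complex_of_real pi * \<i> * complex_of_real (y \<bullet> ww t)) * gaussian y) \<in> borel_measurable lebesgue"
        by (rule measurable_completion, subst measurable_cong_sets[OF sets_lborel refl], rule borel_measurable_continuous_onI)
           (auto simp: gaussian_def intro!: continuous_intros)
      show ?thesis using borel_measurable_times[OF m2 measurable_compose[OF m1 cj']] .
    qed
    have "stft g gaussian (xx t) (ww t) = integral\<^sup>L lebesgue ?F" by (simp add: stft_def)
    also have "\<dots> = (\<integral>s. ?F (xx t + s) \<partial>lebesgue)" by (rule integral_translate[OF Fm])
    finally have st: "stft g gaussian (xx t) (ww t) = (\<integral>s. ?F (xx t + s) \<partial>lebesgue)" .
    have "(\<integral>s. P (t, s) \<partial>lebesgue) = (\<integral>s. indicator {0..1::real} t *\<^sub>R (ph t * ?F (xx t + s)) \<partial>lebesgue)"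
      by (intro Bochner_Integration.integral_cong) (auto simp: P_def \<Phi>_def mult.assoc)
    also have "\<dots> = indicator {0..1::real} t *\<^sub>R (ph t * (\<integral>s. ?F (xx t + s) \<partial>lebesgue))"
      by simp
    finally show ?thesis using st by simp
  qed
  have inner_t: "(\<integral>t. P (t, s) \<partial>lborel) = complex_of_real (exp (- pi * r^2 / 2)) * (gaussian s * cnj (g s))" for s
  proof -
    let ?u = "\<lambda>t::real. exp (2 * complex_of_real pi * \<i> * complex_of_real t)"
    let ?a = "complex_of_real (-2*pi*r*(s \<bullet> e))" and ?b = "complex_of_real (- pi * r^2/2)"
    have Pid: "P (t, s) = (complex_of_real (exp (- pi * r^2 / 2)) * (gaussian s * cnj (g s))) *
         (indicator {0..1::real} t *\<^sub>R exp (?a * ?u t + ?b * (?u t)^2))" for t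
    proof -
      have "\<Phi> t s = complex_of_real (exp (- pi * r^2 / 2)) * gaussian s * exp (?a * ?u t + ?b * (?u t)^2)"
        using kernel_id[OF e, of r t s] unfolding \<Phi>_def ph_def xx_def ww_def .
      thus ?thesis by (simp add: P_def mult_ac)
    qed
    have "(\<integral>t. P (t, s) \<partial>lborel) = (\<integral>t. (complex_of_real (exp (- pi * r^2 / 2)) * (gaussian s * cnj (g s))) *
         (indicator {0..1::real} t *\<^sub>R exp (?a * ?u t + ?b * (?u t)^2)) \<partial>lborel)"
      by (rule Bochner_Integration.integral_cong[OF refl]) (rule Pid)
    also have "\<dots> = (complex_of_real (exp (- pi * r^2 / 2)) * (gaussian s * cnj (g s))) *
         (\<integral>t. indicator {0..1::real} t *\<^sub>R exp (?a * ?u t + ?b * (?u t)^2) \<partial>lborel)"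
      by (rule integral_mult_right_zero)
    also have "\<dots> = complex_of_real (exp (- pi * r^2 / 2)) * (gaussian s * cnj (g s))"
      using circle_lborel[of ?a ?b] by simp
    finally show ?thesis .
  qed
  have lhs: "(\<integral>s. (\<integral>t. P (t, s) \<partial>lborel) \<partial>lebesgue) = complex_of_real (exp (- pi * r^2 / 2)) * c"
    unfolding inner_t c_def inner_L2_def by simp
  have rhs_int: "integrable lborel (\<lambda>t. (\<integral>s. P (t, s) \<partial>lebesgue))"
    using integrable_fst[of "\<lambda>t s. P (t, s)"] Pint by simp
  have eqI: "(\<integral>t. (\<integral>s. P (t, s) \<partial>lebesgue) \<partial>lborel) = complex_of_real (exp (- pi * r^2 / 2)) * c"
    using fub lhs by simp
  have "exp (- pi * r^2 / 2) * norm c = norm (\<integral>t. (\<integral>s. P (t, s) \<partial>lebesgue) \<partial>lborel)"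
    unfolding eqI by (simp add: norm_mult)
  also have "\<dots> \<le> (\<integral>t. norm (\<integral>s. P (t, s) \<partial>lebesgue) \<partial>lborel)"
    by (rule integral_norm_bound)
  also have "\<dots> \<le> (\<integral>t. indicator {0..1::real} t * (norm c / N) \<partial>lborel)"
  proof (rule integral_mono)
    show "integrable lborel (\<lambda>t. norm (\<integral>s. P (t, s) \<partial>lebesgue))" using rhs_int by simp
    show "integrable lborel (\<lambda>t. indicator {0..1::real} t * (norm c / N))"
      by (intro integrable_mult_left) (intro integrable_real_indicator, auto)
    fix t show "norm (\<integral>s. P (t, s) \<partial>lebesgue) \<le> indicator {0..1::real} t * (norm c / N)"
      using Hb[of t] by (auto simp: inner_s norm_mult nph indicator_def less_imp_le)
  qed
  also have "\<dots> = norm c / N" by simp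
  finally have ineq: "exp (- pi * r^2 / 2) * norm c \<le> norm c / N" .
  have "norm c = 0"
  proof (rule ccontr)
    assume "norm c \<noteq> 0"
    hence cp: "norm c > 0" by simp
    from ineq have "exp (- pi * r^2 / 2) * N \<le> 1"
      using assms(1) cp by (simp add: field_simps)
    moreover have "exp (- pi * r^2 / 2) * N > 1"
      using expN by (simp add: exp_minus field_simps)
    ultimately show False by simp
  qed
  thus False using Hb[of 0] by simp
qed

end
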